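(* Let $(E,\rho,[\cdot,\cdot])$ be a Lie algebroid over $M$ admitting a nondegenerate symmetric fiber metric $g$ on $E$ that is invariant, i.e. $\rho(\psi_1)\,g(\psi_2,\psi_3)=g([\psi_1,\psi_2],\psi_3)+g(\psi_2,[\psi_1,\psi_3])$ for all $\psi_1,\psi_2,\psi_3\in\Gamma(E)$. Then $\rho\equiv 0$.
   Context: A Lie algebroid is a vector bundle $E\to M$ with a bundle map $\rho\colon E\to TM$ and a Lie bracket on $\Gamma(E)$ satisfying $[\psi,f\psi']=f[\psi,\psi']+(\rho(\psi)f)\psi'$ for all $f\in C^\infty(M)$. *)

theory Defs
  imports "HOL-Analysis.Analysis"
begin

text \<open>
  Abstract model of a Lie algebroid over a manifold M (the points of M are the
  elements of the type 'm).  C is the algebra of smooth real functions on M,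
  E x is the fiber over x (a finite-dimensional subspace of a real vector space 'v),
  Gamma is the C-module of smooth sections, anchor psi is the vector field rho(psi)
  acting as a derivation on C, br is the Lie bracket on sections.
\<close>

definition smul_fn :: "('m \<Rightarrow> real) \<Rightarrow> ('m \<Rightarrow> 'v::real_vector) \<Rightarrow> 'm \<Rightarrow> 'v" where
  "smul_fn f \<psi> = (\<lambda>x. f x *\<^sub>R \<psi> x)"

definition function_algebra :: "('m \<Rightarrow> real) set \<Rightarrow> bool" where
  "function_algebra C \<longleftrightarrow>
     (\<forall>c. (\<lambda>_. c) \<in> C) \<and>
     (\<forall>f\<in>C. \<forall>h\<in>C. (\<lambda>x. f x + h x) \<in> C \<and> (\<lambda>x. f x * h x) \<in> C)"

definition vector_bundle_sections ::
  "('m \<Rightarrow> real) set \<Rightarrow> ('m \<Rightarrow> 'v::real_vector set) \<Rightarrow> ('m \<Rightarrow> 'v) set \<Rightarrow> bool" where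
  "vector_bundle_sections C E \<Gamma> \<longleftrightarrow>
     (\<forall>x. subspace (E x) \<and> (\<exists>B. finite B \<and> E x = span B)) \<and>
     (\<forall>\<psi>\<in>\<Gamma>. \<forall>x. \<psi> x \<in> E x) \<and>
     (\<lambda>_. 0) \<in> \<Gamma> \<and>
     (\<forall>\<psi>\<in>\<Gamma>. \<forall>\<phi>\<in>\<Gamma>. (\<lambda>x. \<psi> x + \<phi> x) \<in> \<Gamma>) \<and>
     (\<forall>f\<in>C. \<forall>\<psi>\<in>\<Gamma>. smul_fn f \<psi> \<in> \<Gamma>) \<and>
     (\<forall>x. \<forall>e\<in>E x. \<exists>\<psi>\<in>\<Gamma>. \<psi> x = e)"

definition derivation_on :: "('m \<Rightarrow> real) set \<Rightarrow> (('m \<Rightarrow> real) \<Rightarrow> ('m \<Rightarrow> real)) \<Rightarrow> bool" where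
  "derivation_on C X \<longleftrightarrow>
     (\<forall>f\<in>C. X f \<in> C) \<and>
     (\<forall>f\<in>C. \<forall>h\<in>C. \<forall>a b::real. X (\<lambda>x. a * f x + b * h x) = (\<lambda>x. a * X f x + b * X h x)) \<and>
     (\<forall>f\<in>C. \<forall>h\<in>C. X (\<lambda>x. f x * h x) = (\<lambda>x. f x * X h x + X f x * h x))"

definition lie_algebroid ::
  "('m \<Rightarrow> real) set \<Rightarrow> ('m \<Rightarrow> 'v::real_vector set) \<Rightarrow> ('m \<Rightarrow> 'v) set
   \<Rightarrow> (('m \<Rightarrow> 'v) \<Rightarrow> ('m \<Rightarrow> real) \<Rightarrow> ('m \<Rightarrow> real))
   \<Rightarrow> (('m \<Rightarrow> 'v) \<Rightarrow> ('m \<Rightarrow> 'v) \<Rightarrow> ('m \<Rightarrow> 'v)) \<Rightarrow> bool" where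
  "lie_algebroid C E \<Gamma> anchor br \<longleftrightarrow>
     function_algebra C \<and> vector_bundle_sections C E \<Gamma> \<and>
     \<comment> \<open>anchor: bundle map E \<rightarrow> TM, i.e. C-linear map from sections to vector fields\<close>
     (\<forall>\<psi>\<in>\<Gamma>. derivation_on C (anchor \<psi>)) \<and>
     (\<forall>\<psi>\<in>\<Gamma>. \<forall>\<phi>\<in>\<Gamma>. \<forall>f\<in>C.
        anchor (\<lambda>x. \<psi> x + \<phi> x) f = (\<lambda>x. anchor \<psi> f x + anchor \<phi> f x)) \<and>
     (\<forall>h\<in>C. \<forall>\<psi>\<in>\<Gamma>. \<forall>f\<in>C. anchor (smul_fn h \<psi>) f = (\<lambda>x. h x * anchor \<psi> f x)) \<and>
     \<comment> \<open>Lie bracket on sections: R-bilinear, skew, Jacobi\<close>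
     (\<forall>\<psi>\<in>\<Gamma>. \<forall>\<phi>\<in>\<Gamma>. br \<psi> \<phi> \<in> \<Gamma>) \<and>
     (\<forall>\<psi>1\<in>\<Gamma>. \<forall>\<psi>2\<in>\<Gamma>. \<forall>\<phi>\<in>\<Gamma>. \<forall>a b::real.
        br (\<lambda>x. a *\<^sub>R \<psi>1 x + b *\<^sub>R \<psi>2 x) \<phi> = (\<lambda>x. a *\<^sub>R br \<psi>1 \<phi> x + b *\<^sub>R br \<psi>2 \<phi> x)) \<and>
     (\<forall>\<psi>\<in>\<Gamma>. \<forall>\<phi>\<in>\<Gamma>. br \<psi> \<phi> = (\<lambda>x. - br \<phi> \<psi> x)) \<and>
     (\<forall>\<psi>1\<in>\<Gamma>. \<forall>\<psi>2\<in>\<Gamma>. \<forall>\<psi>3\<in>\<Gamma>.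
        (\<lambda>x. br \<psi>1 (br \<psi>2 \<psi>3) x + br \<psi>2 (br \<psi>3 \<psi>1) x + br \<psi>3 (br \<psi>1 \<psi>2) x) = (\<lambda>_. 0)) \<and>
     \<comment> \<open>Leibniz rule [psi, f psi'] = f [psi, psi'] + (rho(psi) f) psi'\<close>
     (\<forall>\<psi>\<in>\<Gamma>. \<forall>\<phi>\<in>\<Gamma>. \<forall>f\<in>C.
        br \<psi> (smul_fn f \<phi>) = (\<lambda>x. f x *\<^sub>R br \<psi> \<phi> x + anchor \<psi> f x *\<^sub>R \<phi> x))"

definition nondeg_sym_fiber_metric ::
  "('m \<Rightarrow> real) set \<Rightarrow> ('m \<Rightarrow> 'v::real_vector set) \<Rightarrow> ('m \<Rightarrow> 'v) set
   \<Rightarrow> ('m \<Rightarrow> 'v \<Rightarrow> 'v \<Rightarrow> real) \<Rightarrow> bool" where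
  "nondeg_sym_fiber_metric C E \<Gamma> g \<longleftrightarrow>
     (\<forall>x. \<forall>u\<in>E x. \<forall>v\<in>E x. g x u v = g x v u) \<and>
     (\<forall>x. \<forall>u\<in>E x. \<forall>v\<in>E x. \<forall>w\<in>E x. \<forall>a b::real.
        g x (a *\<^sub>R u + b *\<^sub>R v) w = a * g x u w + b * g x v w) \<and>
     (\<forall>x. \<forall>u\<in>E x. (\<forall>v\<in>E x. g x u v = 0) \<longrightarrow> u = 0) \<and>
     (\<forall>\<psi>\<in>\<Gamma>. \<forall>\<phi>\<in>\<Gamma>. (\<lambda>x. g x (\<psi> x) (\<phi> x)) \<in> C)"

definition invariant_metric ::
  "('m \<Rightarrow> 'v::real_vector) set \<Rightarrow> (('m \<Rightarrow> 'v) \<Rightarrow> ('m \<Rightarrow> real) \<Rightarrow> ('m \<Rightarrow> real))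
   \<Rightarrow> (('m \<Rightarrow> 'v) \<Rightarrow> ('m \<Rightarrow> 'v) \<Rightarrow> ('m \<Rightarrow> 'v)) \<Rightarrow> ('m \<Rightarrow> 'v \<Rightarrow> 'v \<Rightarrow> real) \<Rightarrow> bool" where
  "invariant_metric \<Gamma> anchor br g \<longleftrightarrow>
     (\<forall>\<psi>1\<in>\<Gamma>. \<forall>\<psi>2\<in>\<Gamma>. \<forall>\<psi>3\<in>\<Gamma>.
        anchor \<psi>1 (\<lambda>x. g x (\<psi>2 x) (\<psi>3 x)) =
        (\<lambda>x. g x (br \<psi>1 \<psi>2 x) (\<psi>3 x) + g x (\<psi>2 x) (br \<psi>1 \<psi>3 x)))"

end

theory Submission
  imports Defs
begin

theorem mainTheorem4:
  fixes C :: "('m \<Rightarrow> real) set"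
    and E :: "'m \<Rightarrow> 'v::real_vector set"
    and \<Gamma> :: "('m \<Rightarrow> 'v) set"
    and anchor :: "('m \<Rightarrow> 'v) \<Rightarrow> ('m \<Rightarrow> real) \<Rightarrow> ('m \<Rightarrow> real)"
    and br :: "('m \<Rightarrow> 'v) \<Rightarrow> ('m \<Rightarrow> 'v) \<Rightarrow> ('m \<Rightarrow> 'v)"
    and g :: "'m \<Rightarrow> 'v \<Rightarrow> 'v \<Rightarrow> real"
  assumes "lie_algebroid C E \<Gamma> anchor br"
    and "nondeg_sym_fiber_metric C E \<Gamma> g"
    and "invariant_metric \<Gamma> anchor br g"
  shows "\<forall>\<psi>\<in>\<Gamma>. \<forall>f\<in>C. anchor \<psi> f = (\<lambda>_. 0)"
proof (intro ballI)
  fix \<psi> f assume psi: "\<psi> \<in> \<Gamma>" and fC: "f \<in> C"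
  have Der: "\<forall>\<psi>\<in>\<Gamma>. derivation_on C (anchor \<psi>)"
    using assms(1) unfolding lie_algebroid_def apply - apply (elim conjE; assumption)+ done
  have FA: "function_algebra C" and VB: "vector_bundle_sections C E \<Gamma>"
    and AnSm: "\<forall>h\<in>C. \<forall>\<psi>\<in>\<Gamma>. \<forall>f\<in>C. anchor (smul_fn h \<psi>) f = (\<lambda>x. h x * anchor \<psi> f x)"
    and BrMem: "\<forall>\<psi>\<in>\<Gamma>. \<forall>\<phi>\<in>\<Gamma>. br \<psi> \<phi> \<in> \<Gamma>"
    and Skew: "\<forall>\<psi>\<in>\<Gamma>. \<forall>\<phi>\<in>\<Gamma>. br \<psi> \<phi> = (\<lambda>x. - br \<phi> \<psi> x)"
    and Leib: "\<forall>\<psi>\<in>\<Gamma>. \<forall>\<phi>\<in>\<Gamma>. \<forall>f\<in>C.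
        br \<psi> (smul_fn f \<phi>) = (\<lambda>x. f x *\<^sub>R br \<psi> \<phi> x + anchor \<psi> f x *\<^sub>R \<phi> x)"
    using assms(1) unfolding lie_algebroid_def apply - apply (elim conjE; assumption)+ done
  note V = VB[unfolded vector_bundle_sections_def]
  have Sub: "\<And>x. subspace (E x)" using conjunct1[OF V] by blast
  have InE: "\<And>\<psi> x. \<psi>\<in>\<Gamma> \<Longrightarrow> \<psi> x \<in> E x"
    using conjunct1[OF conjunct2[OF V]] by blast
  have Sm: "\<And>f \<psi>. f\<in>C \<Longrightarrow> \<psi>\<in>\<Gamma> \<Longrightarrow> smul_fn f \<psi> \<in> \<Gamma>"
    using conjunct1[OF conjunct2[OF conjunct2[OF conjunct2[OF conjunct2[OF V]]]]] by blast
  have Real: "\<And>x e. e \<in> E x \<Longrightarrow> \<exists>\<psi>\<in>\<Gamma>. \<psi> x = e"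
    using conjunct2[OF conjunct2[OF conjunct2[OF conjunct2[OF conjunct2[OF V]]]]] by blast
  note M = assms(2)[unfolded nondeg_sym_fiber_metric_def]
  have Sym: "\<And>x u v. u\<in>E x \<Longrightarrow> v\<in>E x \<Longrightarrow> g x u v = g x v u"
    using conjunct1[OF M] by blast
  have Lin: "\<And>x u v w a b. u\<in>E x \<Longrightarrow> v\<in>E x \<Longrightarrow> w\<in>E x \<Longrightarrow>
        g x (a *\<^sub>R u + b *\<^sub>R v) w = a * g x u w + b * g x v w"
    using conjunct1[OF conjunct2[OF M]] by blast
  have Nd: "\<And>x u. u\<in>E x \<Longrightarrow> (\<forall>v\<in>E x. g x u v = 0) \<Longrightarrow> u = 0"
    using conjunct1[OF conjunct2[OF conjunct2[OF M]]] by blast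
  have GC: "\<And>\<psi> \<phi>. \<psi>\<in>\<Gamma> \<Longrightarrow> \<phi>\<in>\<Gamma> \<Longrightarrow> (\<lambda>x. g x (\<psi> x) (\<phi> x)) \<in> C"
    using conjunct2[OF conjunct2[OF conjunct2[OF M]]] by blast
  have Inv: "\<And>\<psi>1 \<psi>2 \<psi>3. \<psi>1\<in>\<Gamma> \<Longrightarrow> \<psi>2\<in>\<Gamma> \<Longrightarrow> \<psi>3\<in>\<Gamma> \<Longrightarrow>
        anchor \<psi>1 (\<lambda>x. g x (\<psi>2 x) (\<psi>3 x)) =
        (\<lambda>x. g x (br \<psi>1 \<psi>2 x) (\<psi>3 x) + g x (\<psi>2 x) (br \<psi>1 \<psi>3 x))"
    using assms(3) unfolding invariant_metric_def by blast
  define k where "k = anchor \<psi> f"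
  have key: "k x * g x (\<psi>1 x) (\<psi> x) = 0" if p1: "\<psi>1 \<in> \<Gamma>" for \<psi>1 x
  proof -
    define G where "G = (\<lambda>x. g x (\<psi> x) (\<psi> x))"
    have GinC: "G \<in> C" unfolding G_def using GC psi by blast
    have fp: "smul_fn f \<psi>1 \<in> \<Gamma>" using Sm fC p1 by simp
    have e1: "anchor (smul_fn f \<psi>1) G x = f x * anchor \<psi>1 G x"
      using fun_cong[OF bspec[OF bspec[OF bspec[OF AnSm fC] p1] GinC], of x] by simp
    have e2: "anchor \<psi>1 G x = g x (br \<psi>1 \<psi> x) (\<psi> x) + g x (\<psi> x) (br \<psi>1 \<psi> x)"
      unfolding G_def using Inv[OF p1 psi psi] by simp
    have e3: "anchor (smul_fn f \<psi>1) G x = g x (br (smul_fn f \<psi>1) \<psi> x) (\<psi> x) + g x (\<psi> x) (br (smul_fn f \<psi>1) \<psi> x)"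
      unfolding G_def using Inv[OF fp psi psi] by simp
    have e4: "br (smul_fn f \<psi>1) \<psi> x = - br \<psi> (smul_fn f \<psi>1) x" using fun_cong[OF bspec[OF bspec[OF Skew fp] psi], of x] by simp
    have e5: "br \<psi> (smul_fn f \<psi>1) x = f x *\<^sub>R br \<psi> \<psi>1 x + k x *\<^sub>R \<psi>1 x"
      using fun_cong[OF bspec[OF bspec[OF bspec[OF Leib psi] p1] fC], of x] unfolding k_def by simp
    have e6: "br \<psi> \<psi>1 x = - br \<psi>1 \<psi> x" using fun_cong[OF bspec[OF bspec[OF Skew psi] p1], of x] by simp
    define u where "u = br \<psi>1 \<psi> x"
    define w where "w = \<psi>1 x"
    define v where "v = \<psi> x"
    have uE: "u \<in> E x" unfolding u_def using InE bspec[OF bspec[OF BrMem p1] psi] by simp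
    have wE: "w \<in> E x" unfolding w_def using InE p1 by simp
    have vE: "v \<in> E x" unfolding v_def using InE psi by simp
    have b: "br (smul_fn f \<psi>1) \<psi> x = f x *\<^sub>R u + (- k x) *\<^sub>R w"
      unfolding u_def w_def using e4 e5 e6 by (simp add: algebra_simps)
    have bE: "f x *\<^sub>R u + (- k x) *\<^sub>R w \<in> E x"
      by (rule subspace_add[OF Sub subspace_mul[OF Sub uE] subspace_mul[OF Sub wE]])
    have l: "g x (f x *\<^sub>R u + (- k x) *\<^sub>R w) v = f x * g x u v + (- k x) * g x w v"
      by (rule Lin[OF uE wE vE])
    have s1: "g x v (f x *\<^sub>R u + (- k x) *\<^sub>R w) = g x (f x *\<^sub>R u + (- k x) *\<^sub>R w) v"
      by (rule Sym[OF vE bE])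
    have s2: "g x v u = g x u v" by (rule Sym[OF vE uE])
    have "f x * (g x u v + g x v u) = 2 * (f x * g x u v + (- k x) * g x w v)"
      using e1 e2 e3 b l s1 unfolding u_def v_def w_def by simp
    then have "k x * g x w v = 0" using s2 by (simp add: algebra_simps)
    then show ?thesis unfolding w_def v_def .
  qed
  have kpsi: "k x * k x = 0" for x
  proof -
    have z: "smul_fn k \<psi> = smul_fn (\<lambda>_. 0) \<psi>"
    proof
      fix y
      show "smul_fn k \<psi> y = smul_fn (\<lambda>_. 0) \<psi> y"
      proof (cases "k y = 0")
        case False
        have "\<forall>v\<in>E y. g y (\<psi> y) v = 0"
        proof
          fix v assume vE: "v \<in> E y"
          then obtain \<psi>1 where p1: "\<psi>1 \<in> \<Gamma>" "\<psi>1 y = v" using Real by blast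
          have "g y v (\<psi> y) = 0" using key[OF p1(1), of y] False p1(2) by simp
          then show "g y (\<psi> y) v = 0" using Sym[OF InE[OF psi] vE] by simp
        qed
        then have "\<psi> y = 0" by (rule Nd[OF InE[OF psi]])
        then show ?thesis by (simp add: smul_fn_def)
      qed (simp add: smul_fn_def)
    qed
    have kC: "k \<in> C" unfolding k_def using Der psi fC
      unfolding derivation_on_def by simp
    have c0: "(\<lambda>_. 0) \<in> C" using FA unfolding function_algebra_def by blast
    have "anchor (smul_fn k \<psi>) f x = k x * k x" using fun_cong[OF bspec[OF bspec[OF bspec[OF AnSm kC] psi] fC], of x] unfolding k_def by simp
    moreover have "anchor (smul_fn (\<lambda>_. 0) \<psi>) f x = 0" using fun_cong[OF bspec[OF bspec[OF bspec[OF AnSm c0] psi] fC], of x] by simp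
    ultimately show ?thesis using z by simp
  qed
  show "anchor \<psi> f = (\<lambda>_. 0)"
  proof
    fix x show "anchor \<psi> f x = 0" using kpsi[of x] unfolding k_def by simp
  qed
qed

end
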